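(* Let $(p_n)_{n \ge 1}$ be a strictly increasing sequence of prime numbers and fix $\ell \in \mathbb{N}$. Then the Puiseux monoid $\left\langle \frac{1}{p_n p_{n+\ell}} \;\middle|\; n \in \mathbb{N} \right\rangle$ is atomic.
   Context: A Puiseux monoid is an additive submonoid of $(\mathbb{Q}_{\ge 0},+)$; $\langle S \rangle$ denotes the submonoid generated by $S$. An atom of $M$ is a nonzero element $a$ such that $a = x+y$ with $x,y \in M$ forces $x=0$ or $y=0$; $M$ is atomic if every element of $M$ is a finite sum of atoms. *)

theory Defs
  imports Complex_Main "HOL-Library.Multiset" "HOL-Computational_Algebra.Primes"
begin

inductive_set gen_monoid :: "rat set \<Rightarrow> rat set" for S :: "rat set" where
  zero: "0 \<in> gen_monoid S"
| add_gen: "s \<in> S \<Longrightarrow> x \<in> gen_monoid S \<Longrightarrow> s + x \<in> gen_monoid S"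

definition atoms :: "rat set \<Rightarrow> rat set" where
  "atoms M = {a \<in> M. a \<noteq> 0 \<and> (\<forall>x\<in>M. \<forall>y\<in>M. a = x + y \<longrightarrow> x = 0 \<or> y = 0)}"

definition atomic :: "rat set \<Rightarrow> bool" where
  "atomic M \<longleftrightarrow> (\<forall>x\<in>M. \<exists>A :: rat multiset. set_mset A \<subseteq> atoms M \<and> sum_mset A = x)"

end

theory Submission
  imports Defs
begin

definition Rq :: "nat \<Rightarrow> rat set" where
  "Rq q = {r. \<exists>k::int. \<exists>d::nat. d > 0 \<and> coprime d q \<and> r = of_int k / of_nat d}"

lemma Rq_add: assumes "a \<in> Rq q" "b \<in> Rq q" shows "a + b \<in> Rq q"
proof -
  obtain k1 d1 where 1: "d1 > 0" "coprime d1 q" "a = of_int k1 / of_nat d1" using assms(1) unfolding Rq_def by auto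
  obtain k2 d2 where 2: "d2 > 0" "coprime d2 q" "b = of_int k2 / of_nat d2" using assms(2) unfolding Rq_def by auto
  have "a + b = of_int (k1 * int d2 + k2 * int d1) / of_nat (d1 * d2)"
    using 1 2 by (simp add: field_simps)
  moreover have "d1 * d2 > 0" "coprime (d1 * d2) q" using 1 2 by auto
  ultimately show ?thesis unfolding Rq_def by blast
qed

lemma Rq_not: assumes "prime q" "m > 0" shows "1 / of_nat (q * m) \<notin> Rq q"
proof
  assume "1 / of_nat (q * m) \<in> Rq q"
  then obtain k d where h: "d > 0" "coprime d q" "(1::rat) / of_nat (q * m) = of_int k / of_nat d"
    unfolding Rq_def by auto
  have qm: "(of_nat (q*m)::rat) \<noteq> 0" using assms prime_gt_0_nat by simp
  from h(3) have "(of_nat d :: rat) = of_int k * of_nat (q*m)" using h(1) qm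
    by (simp add: field_simps)
  hence "int d = k * int (q*m)" by (metis of_int_eq_iff of_int_mult of_int_of_nat_eq)
  hence "int q dvd int d" by simp
  hence "q dvd d" by simp
  with h(2) have "q dvd 1" by (metis coprime_common_divisor dvd_refl)
  with assms(1) show False by simp
qed

lemma gen_nonneg: assumes "\<And>s. s \<in> S \<Longrightarrow> s \<ge> 0" "x \<in> gen_monoid S" shows "x \<ge> 0"
  using assms(2) by induction (auto intro: add_nonneg_nonneg assms(1))

lemma gen_sum: assumes "x \<in> gen_monoid S" shows "\<exists>A. set_mset A \<subseteq> S \<and> sum_mset A = x"
  using assms
proof induction
  case zero then show ?case by (intro exI[of _ "{#}"]) simp
next
  case (add_gen s x)
  then obtain A where "set_mset A \<subseteq> S" "sum_mset A = x" by auto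
  then show ?case using add_gen by (intro exI[of _ "add_mset s A"]) auto
qed

theorem proposition3p7:
  fixes p :: "nat \<Rightarrow> nat" and l :: nat
  assumes primes: "\<And>n. n \<ge> 1 \<Longrightarrow> prime (p n)"
    and incr: "\<And>m n. 1 \<le> m \<Longrightarrow> m < n \<Longrightarrow> p m < p n"
  shows "atomic (gen_monoid {1 / (of_nat (p n * p (n + l)) :: rat) | n. n \<ge> 1})"
proof -
  define S where "S = {1 / (of_nat (p n * p (n + l)) :: rat) | n. n \<ge> 1}"
  define M where "M = gen_monoid S"
  have ppos: "p n > 0" if "n \<ge> 1" for n using primes[OF that] prime_gt_0_nat by blast
  have mono: "p m \<le> p n" if "1 \<le> m" "m \<le> n" for m n
    using incr[OF that(1), of n] that by (cases "m = n") auto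
  have Spos: "s > 0" if "s \<in> S" for s using that ppos unfolding S_def by auto
  have Mnn: "x \<ge> 0" if "x \<in> M" for x
    using gen_nonneg[of S x] Spos that unfolding M_def by fastforce
  have atom: "1 / (of_nat (p n * p (n + l)) :: rat) \<in> atoms M" if n1: "n \<ge> 1" for n
  proof -
    let ?a = "1 / (of_nat (p n * p (n + l)) :: rat)"
    let ?q = "p n"
    have pq: "prime ?q" using primes n1 by blast
    have gen: "s \<in> Rq ?q" if "s \<in> S" "s < ?a" for s
    proof -
      obtain j where j: "j \<ge> 1" "s = 1 / (of_nat (p j * p (j + l)) :: rat)" using \<open>s \<in> S\<close> unfolding S_def by auto
      have "j > n"
      proof (rule ccontr)
        assume "\<not> n < j"
        hence "p j \<le> p n" "p (j+l) \<le> p (n+l)" using mono j(1) by auto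
        hence "p j * p (j+l) \<le> p n * p (n+l)" by (rule mult_mono) auto
        hence "(of_nat (p j * p (j + l)) :: rat) \<le> of_nat (p n * p (n + l))" by linarith
        moreover have "(0::rat) < of_nat (p j * p (j + l))" using ppos j(1) by simp
        ultimately have "s \<ge> ?a" using j(2) by (simp add: frac_le)
        with that show False by simp
      qed
      have c1: "coprime (p j) ?q" using \<open>j > n\<close> incr[OF n1] primes n1 j(1)
        by (metis primes_coprime less_not_refl)
      have "n < j + l" using \<open>j > n\<close> by simp
      hence c2: "coprime (p (j+l)) ?q" using incr[OF n1] primes n1 j(1)
        by (metis primes_coprime less_not_refl le_add1 order_trans)
      have "coprime (p j * p (j+l)) ?q" using c1 c2 by simp
      moreover have "p j * p (j+l) > 0" using ppos j(1) by simp
      ultimately show ?thesis unfolding Rq_def using j(2)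
        by (intro CollectI exI[of _ 1] exI[of _ "p j * p (j+l)"]) simp
    qed
    have small: "x < ?a \<longrightarrow> x \<in> Rq ?q" if "x \<in> M" for x
      using that unfolding M_def
    proof induction
      case zero
      show ?case unfolding Rq_def by (intro impI CollectI exI[of _ 0] exI[of _ 1]) simp
    next
      case (add_gen s x)
      have "x \<ge> 0" using Mnn add_gen(2) unfolding M_def by blast
      moreover have "s > 0" using Spos add_gen(1) by blast
      ultimately show ?case using add_gen gen Rq_add by fastforce
    qed
    have "p (n+l) > 0" using ppos n1 by simp
    hence notR: "?a \<notin> Rq ?q" using Rq_not[OF pq] by simp
    have "?a \<in> S" unfolding S_def using n1 by blast
    hence inM: "?a \<in> M" unfolding M_def
      using gen_monoid.add_gen[OF _ gen_monoid.zero, of ?a S] by simp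
    have "?a \<noteq> 0" using ppos n1 by simp
    moreover have "x = 0 \<or> y = 0" if "x \<in> M" "y \<in> M" "?a = x + y" for x y
    proof (rule ccontr)
      assume "\<not> (x = 0 \<or> y = 0)"
      hence "x > 0" "y > 0" using Mnn that by force+
      hence "x < ?a" "y < ?a" using that(3) by auto
      hence "x \<in> Rq ?q" "y \<in> Rq ?q" using small that by auto
      hence "?a \<in> Rq ?q" using that(3) Rq_add by simp
      with notR show False by simp
    qed
    ultimately show ?thesis using inM unfolding atoms_def by blast
  qed
  have "S \<subseteq> atoms M" using atom unfolding S_def by auto
  hence "atomic M" unfolding atomic_def M_def using gen_sum by (metis order_trans)
  thus ?thesis unfolding M_def S_def .
qed

end
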